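(* Let $L\neq0$, $\ell=(L^2)^{1/3}$, and $h<-\frac32\ell$. Then the cubic $f(u)=u^3+2hu^2+2(c+1)u-L^2$ has three distinct positive real roots $0<u_1<u_2<u_3$ if and only if $c\in(C_{1,\xi}(h),C_{2,\xi}(h))$.
   Context: For $h<-\frac32\ell$, let $s_1\in(0,\ell)$ and $s_2\in(\ell,\infty)$ be the unique numbers with $2s_i+L^2/s_i^2=-2h$; then $C_{1,\xi}(h)$ and $C_{2,\xi}(h)$ are defined by $(s_i+2L^2/s_i^2)s_i=2(C_{i,\xi}(h)+1)$, $i=1,2$. (In the spatial Stark problem, three distinct positive roots of $f$ means that the parabolic coordinate $\xi$ has a non-constant periodic motion, $\xi^2$ oscillating between $u_1$ and $u_2$.) *)

theory Defs
  imports Complex_Main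
begin

definition ell :: "real \<Rightarrow> real" where
  "ell L = root 3 (L^2)"

definition s1 :: "real \<Rightarrow> real \<Rightarrow> real" where
  "s1 L h = (THE s. 0 < s \<and> s < ell L \<and> 2 * s + L^2 / s^2 = - 2 * h)"

definition s2 :: "real \<Rightarrow> real \<Rightarrow> real" where
  "s2 L h = (THE s. ell L < s \<and> 2 * s + L^2 / s^2 = - 2 * h)"

definition C1_xi :: "real \<Rightarrow> real \<Rightarrow> real" where
  "C1_xi L h = (s1 L h + 2 * L^2 / (s1 L h)^2) * s1 L h / 2 - 1"

definition C2_xi :: "real \<Rightarrow> real \<Rightarrow> real" where
  "C2_xi L h = (s2 L h + 2 * L^2 / (s2 L h)^2) * s2 L h / 2 - 1"

definition stark_f :: "real \<Rightarrow> real \<Rightarrow> real \<Rightarrow> real \<Rightarrow> real" where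
  "stark_f L h c u = u^3 + 2 * h * u^2 + 2 * (c + 1) * u - L^2"

end

theory Submission
  imports Defs "HOL-Real_Asymp.Real_Asymp"
begin

lemma g_dec:
  fixes K l a b :: real
  assumes "l > 0" "l^3 = K" "0 < a" "a < b" "b \<le> l"
  shows "2*b + K/b^2 < 2*a + K/a^2"
proof -
  have "b^3 \<le> l^3" using assms by (intro power_mono) auto
  hence Kb: "b^3 \<le> K" using assms by simp
  have "a^2*b^2 < a*b^3" using assms by (simp add: power2_eq_square power3_eq_cube)
  moreover have "a^2*b^2 < b^4" using assms by (simp add: power2_eq_square power4_eq_xxxx mult_strict_mono)
  moreover have "b^3*(a+b) \<le> K*(a+b)" using Kb assms by (intro mult_right_mono) auto
  ultimately have key: "2*a^2*b^2 < K*(a+b)" by (simp add: algebra_simps power2_eq_square power3_eq_cube power4_eq_xxxx)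
  have "(2*b + K/b^2) * (a^2*b^2) < (2*a + K/a^2) * (a^2*b^2)"
  proof -
    have "(2*b + K/b^2) * (a^2*b^2) = 2*b*a^2*b^2 + K*a^2" using assms by (simp add: field_simps)
    moreover have "(2*a + K/a^2) * (a^2*b^2) = 2*a*a^2*b^2 + K*b^2" using assms by (simp add: field_simps)
    moreover have "2*b*a^2*b^2 + K*a^2 < 2*a*a^2*b^2 + K*b^2"
    proof -
      have "(b-a)*(2*a^2*b^2) < (b-a)*(K*(a+b))" using key assms by simp
      thus ?thesis by (simp add: algebra_simps power2_eq_square)
    qed
    ultimately show ?thesis by simp
  qed
  moreover have "a^2*b^2 > 0" using assms by simp
  ultimately show ?thesis using mult_less_cancel_right_pos by blast
qed

lemma g_inc:
  fixes K l a b :: real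
  assumes "l > 0" "l^3 = K" "l \<le> a" "a < b"
  shows "2*a + K/a^2 < 2*b + K/b^2"
proof -
  have "l^3 \<le> a^3" using assms by (intro power_mono) auto
  hence Ka: "K \<le> a^3" using assms by simp
  have "0 < a" using assms by simp
  have "a^2*(a*a) < a^2*(b*b)" using assms \<open>0<a\<close> by (intro mult_strict_left_mono mult_strict_mono) auto
  moreover have "a^2*(a*b) < a^2*(b*b)" using assms \<open>0<a\<close> by (intro mult_strict_left_mono) auto
  moreover have "K*(a+b) \<le> a^3*(a+b)" using Ka assms \<open>0<a\<close> by (intro mult_right_mono) auto
  ultimately have key: "K*(a+b) < 2*a^2*b^2" by (simp add: algebra_simps power2_eq_square power3_eq_cube)
  have "(2*a + K/a^2) * (a^2*b^2) < (2*b + K/b^2) * (a^2*b^2)"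
  proof -
    have "(2*b + K/b^2) * (a^2*b^2) = 2*b*a^2*b^2 + K*a^2" using assms \<open>0<a\<close> by (simp add: field_simps)
    moreover have "(2*a + K/a^2) * (a^2*b^2) = 2*a*a^2*b^2 + K*b^2" using assms \<open>0<a\<close> by (simp add: field_simps)
    moreover have "2*a*a^2*b^2 + K*b^2 < 2*b*a^2*b^2 + K*a^2"
    proof -
      have "(b-a)*(K*(a+b)) < (b-a)*(2*a^2*b^2)" using key assms by simp
      thus ?thesis by (simp add: algebra_simps power2_eq_square)
    qed
    ultimately show ?thesis by simp
  qed
  moreover have "a^2*b^2 > 0" using assms \<open>0<a\<close> by simp
  ultimately show ?thesis using mult_less_cancel_right_pos by blast
qed


lemma ell_props:
  assumes "L \<noteq> (0::real)"
  shows "ell L > 0" "(ell L)^3 = L^2"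
  unfolding ell_def using assms by auto

lemma s1_props:
  fixes L h :: real
  assumes "L \<noteq> 0" "h < - (3/2) * ell L"
  shows "0 < s1 L h \<and> s1 L h < ell L \<and> 2 * s1 L h + L^2 / (s1 L h)^2 = - 2 * h"
proof -
  define l where "l = ell L"
  define K where "K = L^2"
  define H where "H = -2*h"
  have l0: "l > 0" and lK: "l^3 = K" using ell_props[OF assms(1)] by (auto simp: l_def K_def)
  have H3: "H > 3*l" using assms(2) by (simp add: H_def l_def)
  define a where "a = l*l/H"
  have a0: "a > 0" using l0 H3 by (simp add: a_def)
  have al: "a < l" using l0 H3 unfolding a_def by (simp add: field_simps)
  have "K/a^2 = H^2/l" unfolding a_def using l0 H3 lK[symmetric]
    by (simp add: field_simps power2_eq_square power3_eq_cube)
  also have "H^2/l \<ge> H" using l0 H3 by (simp add: field_simps power2_eq_square)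
  finally have ga: "2*a + K/a^2 \<ge> H" using a0 by simp
  have gl: "2*l + K/l^2 < H" using l0 H3 lK[symmetric]
    by (simp add: power2_eq_square power3_eq_cube)
  have cont: "continuous_on {a..l} (\<lambda>s. 2*s + K/s^2)"
    using a0 by (intro continuous_intros) auto
  obtain x where x: "a \<le> x" "x \<le> l" "2*x + K/x^2 = H"
    using IVT2'[of "\<lambda>s. 2*s + K/s^2" l H a, OF _ ga _ cont] gl al by auto
  have xl: "x < l" using x gl by (metis order_less_le)
  have x0: "x > 0" using x a0 by simp
  have ex: "\<exists>!s. 0 < s \<and> s < l \<and> 2 * s + K / s^2 = H"
  proof (rule ex1I[of _ x])
    show "0 < x \<and> x < l \<and> 2 * x + K / x^2 = H" using x0 xl x by simp
  next
    fix y assume y: "0 < y \<and> y < l \<and> 2 * y + K / y^2 = H"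
    show "y = x"
    proof (rule ccontr)
      assume "y \<noteq> x"
      then consider "y < x" | "x < y" by linarith
      thus False
      proof cases
        case 1 thus False using g_dec[OF l0 lK, of y x] y x xl by simp
      next
        case 2 thus False using g_dec[OF l0 lK, of x y] y x x0 by simp
      qed
    qed
  qed
  have "s1 L h = (THE s. 0 < s \<and> s < l \<and> 2 * s + K / s^2 = H)"
    unfolding s1_def l_def K_def H_def by simp
  with theI'[OF ex] show ?thesis by (simp add: l_def K_def H_def)
qed

lemma s2_props:
  fixes L h :: real
  assumes "L \<noteq> 0" "h < - (3/2) * ell L"
  shows "ell L < s2 L h \<and> 2 * s2 L h + L^2 / (s2 L h)^2 = - 2 * h"
proof -
  define l where "l = ell L"
  define K where "K = L^2"
  define H where "H = -2*h"
  have l0: "l > 0" and lK: "l^3 = K" using ell_props[OF assms(1)] by (auto simp: l_def K_def)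
  have H3: "H > 3*l" using assms(2) by (simp add: H_def l_def)
  define b where "b = H"
  have bl: "l < b" using l0 H3 by (simp add: b_def)
  have K0: "K > 0" using assms(1) by (simp add: K_def)
  have gb: "2*b + K/b^2 \<ge> H" using K0 H3 l0 by (simp add: b_def)
  have gl: "2*l + K/l^2 < H" using l0 H3 lK[symmetric]
    by (simp add: power2_eq_square power3_eq_cube)
  have cont: "continuous_on {l..b} (\<lambda>s. 2*s + K/s^2)"
    using l0 by (intro continuous_intros) auto
  obtain x where x: "l \<le> x" "x \<le> b" "2*x + K/x^2 = H"
    using IVT'[of "\<lambda>s. 2*s + K/s^2" l H b, OF _ gb _ cont] gl bl by auto
  have xl: "l < x" using x gl by (metis order_less_le)
  have ex: "\<exists>!s. l < s \<and> 2 * s + K / s^2 = H"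
  proof (rule ex1I[of _ x])
    show "l < x \<and> 2 * x + K / x^2 = H" using xl x by simp
  next
    fix y assume y: "l < y \<and> 2 * y + K / y^2 = H"
    show "y = x"
    proof (rule ccontr)
      assume "y \<noteq> x"
      then consider "y < x" | "x < y" by linarith
      thus False
      proof cases
        case 1 thus False using g_inc[OF l0 lK, of y x] y x by simp
      next
        case 2 thus False using g_inc[OF l0 lK, of x y] y x xl by simp
      qed
    qed
  qed
  have "s2 L h = (THE s. l < s \<and> 2 * s + K / s^2 = H)"
    unfolding s2_def l_def K_def H_def by simp
  with theI'[OF ex] show ?thesis by (simp add: l_def K_def H_def)
qed


theorem proposition5p2:
  fixes L h c :: real
  assumes "L \<noteq> 0"
    and "h < - (3/2) * ell L"
  shows "(\<exists>u1 u2 u3. 0 < u1 \<and> u1 < u2 \<and> u2 < u3 \<and>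
            stark_f L h c u1 = 0 \<and> stark_f L h c u2 = 0 \<and> stark_f L h c u3 = 0)
         \<longleftrightarrow> (C1_xi L h < c \<and> c < C2_xi L h)"
proof -
  define l where "l = ell L"
  define K where "K = L^2"
  define y where "y = 2*(c+1)"
  define a1 where "a1 = s1 L h"
  define a2 where "a2 = s2 L h"
  define \<psi> where "\<psi> = (\<lambda>u. u^2 + 2*h*u + y - K/u)"
  have l0: "l > 0" and lK: "l^3 = K" using ell_props[OF assms(1)] by (auto simp: l_def K_def)
  have K0: "K > 0" using assms(1) by (simp add: K_def)
  have A1: "0 < a1" "a1 < l" "2*a1 + K/a1^2 = -2*h"
    using s1_props[OF assms] by (auto simp: a1_def l_def K_def)
  have A2: "l < a2" "2*a2 + K/a2^2 = -2*h"
    using s2_props[OF assms] by (auto simp: a2_def l_def K_def)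
  have gs1: "2*u + K/u^2 > -2*h" if "0 < u" "u < a1" for u
    using g_dec[OF l0 lK, of u a1] that A1 by simp
  have gs2: "2*u + K/u^2 < -2*h" if "a1 < u" "u < a2" for u
  proof -
    consider "u < l" | "u = l" | "l < u" by linarith
    thus ?thesis
    proof cases
      case 1 thus ?thesis using g_dec[OF l0 lK, of a1 u] that A1 by simp
    next
      case 2
      have "2*l + K/l^2 = 3*l" using l0 lK[symmetric] by (simp add: power2_eq_square power3_eq_cube)
      thus ?thesis using 2 assms(2) by (simp add: l_def)
    next
      case 3 thus ?thesis using g_inc[OF l0 lK, of u a2] that A2 by simp
    qed
  qed
  have gs3: "2*u + K/u^2 > -2*h" if "a2 < u" for u
    using g_inc[OF l0 lK, of a2 u] that A2 by simp
  have der: "DERIV \<psi> u :> 2*u + 2*h + K/u^2" if "u > 0" for u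
    unfolding \<psi>_def using that
    by (auto intro!: derivative_eq_intros simp: field_simps power2_eq_square)
  have cont: "continuous_on {a..b} \<psi>" if "0 < a" for a b
    unfolding \<psi>_def using that by (intro continuous_intros) auto
  have inc1: "\<psi> a < \<psi> b" if "0 < a" "a < b" "b \<le> a1" for a b
  proof (rule DERIV_pos_imp_increasing_open[OF that(2) _ cont[OF that(1)]])
    fix x assume "a < x" "x < b"
    thus "\<exists>d. DERIV \<psi> x :> d \<and> d > 0" using der[of x] gs1[of x] that by force
  qed
  have dec: "\<psi> b < \<psi> a" if "a1 \<le> a" "a < b" "b \<le> a2" for a b
  proof (rule DERIV_neg_imp_decreasing_open[OF that(2) _ cont])
    fix x assume "a < x" "x < b"
    thus "\<exists>d. DERIV \<psi> x :> d \<and> d < 0" using der[of x] gs2[of x] that A1 by force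
  qed (use that A1 in auto)
  have inc2: "\<psi> a < \<psi> b" if "a2 \<le> a" "a < b" for a b
  proof (rule DERIV_pos_imp_increasing_open[OF that(2) _ cont])
    fix x assume "a < x" "x < b"
    thus "\<exists>d. DERIV \<psi> x :> d \<and> d > 0" using der[of x] gs3[of x] that A1 A2 l0 by force
  qed (use that A1 A2 l0 in auto)
  have a12: "a1 < a2" using A1 A2 by simp
  have fpsi: "stark_f L h c u = u * \<psi> u" if "u > 0" for u
    unfolding stark_f_def \<psi>_def y_def K_def using that
    by (simp add: field_simps power2_eq_square power3_eq_cube)
  have fzero: "stark_f L h c u = 0 \<longleftrightarrow> \<psi> u = 0" if "u > 0" for u
    using fpsi[OF that] that by simp
  have P1: "\<psi> a1 = y - 2*(C1_xi L h + 1)"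
  proof -
    have E0: "K + 2*a1^3 + 2*h*a1^2 = 0" using A1
      by (simp add: field_simps power2_eq_square power3_eq_cube)
    have "\<psi> a1 - (y - 2*(C1_xi L h + 1)) = (K + 2*a1^3 + 2*h*a1^2)/a1"
      unfolding \<psi>_def C1_xi_def a1_def[symmetric] K_def[symmetric] using A1(1)
      by (simp add: field_simps power2_eq_square power3_eq_cube)
    thus ?thesis using E0 by simp
  qed
  have P2: "\<psi> a2 = y - 2*(C2_xi L h + 1)"
  proof -
    have a20: "a2 > 0" using A1 A2 by simp
    have E0: "K + 2*a2^3 + 2*h*a2^2 = 0" using A2 a20
      by (simp add: field_simps power2_eq_square power3_eq_cube)
    have "\<psi> a2 - (y - 2*(C2_xi L h + 1)) = (K + 2*a2^3 + 2*h*a2^2)/a2"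
      unfolding \<psi>_def C2_xi_def a2_def[symmetric] K_def[symmetric] using a20
      by (simp add: field_simps power2_eq_square power3_eq_cube)
    thus ?thesis using E0 by simp
  qed
  have iff: "(C1_xi L h < c \<and> c < C2_xi L h) \<longleftrightarrow> (\<psi> a1 > 0 \<and> \<psi> a2 < 0)"
    using P1 P2 by (simp add: y_def)
  show ?thesis
  proof
    assume "\<exists>u1 u2 u3. 0 < u1 \<and> u1 < u2 \<and> u2 < u3 \<and>
            stark_f L h c u1 = 0 \<and> stark_f L h c u2 = 0 \<and> stark_f L h c u3 = 0"
    then obtain u1 u2 u3 where u: "0 < u1" "u1 < u2" "u2 < u3"
      "\<psi> u1 = 0" "\<psi> u2 = 0" "\<psi> u3 = 0"
      using fzero by (metis order.strict_trans)
    have "\<psi> a1 > 0"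
    proof (rule ccontr)
      assume n: "\<not> \<psi> a1 > 0"
      have loc: "u = a1 \<or> u > a2" if "u > 0" "\<psi> u = 0" for u
      proof (rule ccontr)
        assume "\<not> (u = a1 \<or> u > a2)"
        then consider "u < a1" | "a1 < u" "u \<le> a2" by linarith
        thus False
        proof cases
          case 1 thus False using inc1[of u a1] that n by simp
        next
          case 2 thus False using dec[of a1 u] that n by simp
        qed
      qed
      show False
      proof (cases "u2 > a2")
        case True thus False using inc2[of u2 u3] u by simp
      next
        case False
        hence "u2 = a1" using loc[of u2] u by simp
        thus False using loc[of u1] u a12 by simp
      qed
    qed
    moreover have "\<psi> a2 < 0"
    proof (rule ccontr)
      assume n: "\<not> \<psi> a2 < 0"
      have loc: "u = a2 \<or> u < a1" if "u > 0" "\<psi> u = 0" for u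
      proof (rule ccontr)
        assume "\<not> (u = a2 \<or> u < a1)"
        then consider "a2 < u" | "a1 \<le> u" "u < a2" by linarith
        thus False
        proof cases
          case 1 thus False using inc2[of a2 u] that n by simp
        next
          case 2 thus False using dec[of u a2] that n by simp
        qed
      qed
      show False
      proof (cases "u2 < a1")
        case True thus False using inc1[of u1 u2] u by simp
      next
        case False
        hence "u2 = a2" using loc[of u2] u by simp
        thus False using loc[of u3] u a12 by simp
      qed
    qed
    ultimately show "C1_xi L h < c \<and> c < C2_xi L h" using iff by simp
  next
    assume "C1_xi L h < c \<and> c < C2_xi L h"
    hence p1: "\<psi> a1 > 0" and p2: "\<psi> a2 < 0" using iff by auto
    define F where "F = stark_f L h c"
    have Fc: "continuous_on {a..b} F" for a b
      unfolding F_def stark_f_def by (intro continuous_intros)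
    have F0: "F 0 < 0" using K0 by (simp add: F_def stark_f_def K_def)
    have F1: "F a1 > 0" using fpsi[of a1] A1 p1 by (simp add: F_def)
    have F2: "F a2 < 0" using fpsi[of a2] A1(1) a12 p2 by (simp add: F_def mult_pos_neg)
    have "\<forall>\<^sub>F u in at_top. F u > 0"
    proof -
      have "filterlim F at_top at_top" unfolding F_def stark_f_def
        by real_asymp
      thus ?thesis by (simp add: filterlim_at_top_dense)
    qed
    moreover have "\<forall>\<^sub>F u in at_top. u > a2" by (rule eventually_gt_at_top)
    ultimately obtain M where M: "F M > 0" "M > a2"
      by (metis (mono_tags, lifting) eventually_conj eventually_happens' trivial_limit_at_top_linorder)
    obtain x1 where x1: "0 \<le> x1" "x1 \<le> a1" "F x1 = 0"
      using IVT'[of F 0 0 a1, OF _ _ _ Fc] F0 F1 A1 by auto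
    obtain x2 where x2: "a1 \<le> x2" "x2 \<le> a2" "F x2 = 0"
      using IVT2'[of F a2 0 a1, OF _ _ _ Fc] F1 F2 a12 by auto
    obtain x3 where x3: "a2 \<le> x3" "x3 \<le> M" "F x3 = 0"
      using IVT'[of F a2 0 M, OF _ _ _ Fc] F2 M by auto
    have "x1 \<noteq> 0" "x1 \<noteq> a1" "x2 \<noteq> a1" "x2 \<noteq> a2" "x3 \<noteq> a2"
      using x1 x2 x3 F0 F1 F2 by auto
    hence "0 < x1 \<and> x1 < x2 \<and> x2 < x3" using x1 x2 x3 by auto
    thus "\<exists>u1 u2 u3. 0 < u1 \<and> u1 < u2 \<and> u2 < u3 \<and>
            stark_f L h c u1 = 0 \<and> stark_f L h c u2 = 0 \<and> stark_f L h c u3 = 0"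
      using x1 x2 x3 unfolding F_def by blast
  qed
qed

end
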